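(* Assume $D_i>0$ for all $i\in\mathcal D$. Then all minimum-delay equilibrium solutions of the instance have the same vector of delays $(\delta_i)_{i\in\mathcal D}$, where $\delta_i=\min_{j}(\ell_{ij}+\beta_j)$.
   Context: An instance consists of finite sets $\mathcal D$ (demand nodes) and $\mathcal F$ (FCs), finite nonnegative travel times $\ell_{ij}$, demands $D_i\ge0$ and capacities $C_j\ge0$ with $\sum_iD_i\le\sum_jC_j$. An assignment is $x\in\mathbb R_{\ge0}^{\mathcal D\times\mathcal F}$ with $\sum_jx_{ij}=D_i$ for all $i$ and $\sum_ix_{ij}\le C_j$ for all $j$. An equilibrium solution is a pair $(x,\beta)$ with $x$ an assignment and $\beta\in\mathbb R^{\mathcal F}_{\ge0}$ such that $x_{ij}>0$ only if $j\in\arg\min_{j'}(\ell_{ij'}+\beta_{j'})$, and $\beta_j=0$ whenever $\sum_ix_{ij}<C_j$. The delay of demand $i$ is $\delta_i=\min_j(\ell_{ij}+\beta_j)$; the delay of the solution is $\sum_iD_i\delta_i$, and a minimum-delay equilibrium solution minimizes this over all equilibrium solutions. *)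

theory Defs
  imports Main "HOL-Analysis.Analysis"
begin

text \<open>An instance: finite demand set Dn, finite FC set Fc, travel times l,
 demands Dem, capacities Cap.  Assignments are functions x :: 'd \<Rightarrow> 'f \<Rightarrow> real,
 only their values on Dn \<times> Fc matter.\<close>

definition instance_ok ::
  "'d set \<Rightarrow> 'f set \<Rightarrow> ('d \<Rightarrow> 'f \<Rightarrow> real) \<Rightarrow> ('d \<Rightarrow> real) \<Rightarrow> ('f \<Rightarrow> real) \<Rightarrow> bool" where
  "instance_ok Dn Fc l Dem Cap \<longleftrightarrow>
     finite Dn \<and> finite Fc \<and>
     (\<forall>i\<in>Dn. \<forall>j\<in>Fc. l i j \<ge> 0) \<and>
     (\<forall>i\<in>Dn. Dem i \<ge> 0) \<and> (\<forall>j\<in>Fc. Cap j \<ge> 0) \<and>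
     (\<Sum>i\<in>Dn. Dem i) \<le> (\<Sum>j\<in>Fc. Cap j)"

definition assignment ::
  "'d set \<Rightarrow> 'f set \<Rightarrow> ('d \<Rightarrow> real) \<Rightarrow> ('f \<Rightarrow> real) \<Rightarrow> ('d \<Rightarrow> 'f \<Rightarrow> real) \<Rightarrow> bool" where
  "assignment Dn Fc Dem Cap x \<longleftrightarrow>
     (\<forall>i\<in>Dn. \<forall>j\<in>Fc. x i j \<ge> 0) \<and>
     (\<forall>i\<in>Dn. (\<Sum>j\<in>Fc. x i j) = Dem i) \<and>
     (\<forall>j\<in>Fc. (\<Sum>i\<in>Dn. x i j) \<le> Cap j)"

definition node_delay :: "'f set \<Rightarrow> ('d \<Rightarrow> 'f \<Rightarrow> real) \<Rightarrow> ('f \<Rightarrow> real) \<Rightarrow> 'd \<Rightarrow> real" where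
  "node_delay Fc l \<beta> i = Min ((\<lambda>j. l i j + \<beta> j) ` Fc)"

definition equilibrium ::
  "'d set \<Rightarrow> 'f set \<Rightarrow> ('d \<Rightarrow> 'f \<Rightarrow> real) \<Rightarrow> ('d \<Rightarrow> real) \<Rightarrow> ('f \<Rightarrow> real)
     \<Rightarrow> ('d \<Rightarrow> 'f \<Rightarrow> real) \<Rightarrow> ('f \<Rightarrow> real) \<Rightarrow> bool" where
  "equilibrium Dn Fc l Dem Cap x \<beta> \<longleftrightarrow>
     assignment Dn Fc Dem Cap x \<and>
     (\<forall>j\<in>Fc. \<beta> j \<ge> 0) \<and>
     (\<forall>i\<in>Dn. \<forall>j\<in>Fc. x i j > 0 \<longrightarrow> (\<forall>j'\<in>Fc. l i j + \<beta> j \<le> l i j' + \<beta> j')) \<and>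
     (\<forall>j\<in>Fc. (\<Sum>i\<in>Dn. x i j) < Cap j \<longrightarrow> \<beta> j = 0)"

definition total_delay ::
  "'d set \<Rightarrow> 'f set \<Rightarrow> ('d \<Rightarrow> 'f \<Rightarrow> real) \<Rightarrow> ('d \<Rightarrow> real) \<Rightarrow> ('f \<Rightarrow> real) \<Rightarrow> real" where
  "total_delay Dn Fc l Dem \<beta> = (\<Sum>i\<in>Dn. Dem i * node_delay Fc l \<beta> i)"

definition min_delay_equilibrium ::
  "'d set \<Rightarrow> 'f set \<Rightarrow> ('d \<Rightarrow> 'f \<Rightarrow> real) \<Rightarrow> ('d \<Rightarrow> real) \<Rightarrow> ('f \<Rightarrow> real)
     \<Rightarrow> ('d \<Rightarrow> 'f \<Rightarrow> real) \<Rightarrow> ('f \<Rightarrow> real) \<Rightarrow> bool" where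
  "min_delay_equilibrium Dn Fc l Dem Cap x \<beta> \<longleftrightarrow>
     equilibrium Dn Fc l Dem Cap x \<beta> \<and>
     (\<forall>x' \<beta>'. equilibrium Dn Fc l Dem Cap x' \<beta>' \<longrightarrow>
        total_delay Dn Fc l Dem \<beta> \<le> total_delay Dn Fc l Dem \<beta>')"

end

theory Submission
  imports Defs
begin

definition gapv :: "'d set \<Rightarrow> 'f set \<Rightarrow> ('d \<Rightarrow> 'f \<Rightarrow> real) \<Rightarrow> ('f \<Rightarrow> real)
     \<Rightarrow> ('d \<Rightarrow> 'f \<Rightarrow> real) \<Rightarrow> ('f \<Rightarrow> real) \<Rightarrow> real" where
  "gapv Dn Fc l Cap x \<beta> =
    (\<Sum>i\<in>Dn. \<Sum>j\<in>Fc. (l i j + \<beta> j - node_delay Fc l \<beta> i) * x i j)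
    + (\<Sum>j\<in>Fc. \<beta> j * (Cap j - (\<Sum>i\<in>Dn. x i j)))"

lemma gap_eq:
  assumes "assignment Dn Fc Dem Cap x"
  shows "gapv Dn Fc l Cap x \<beta> =
     (\<Sum>i\<in>Dn. \<Sum>j\<in>Fc. l i j * x i j) - total_delay Dn Fc l Dem \<beta> + (\<Sum>j\<in>Fc. Cap j * \<beta> j)"
proof -
  have rs: "\<And>i. i \<in> Dn \<Longrightarrow> (\<Sum>j\<in>Fc. x i j) = Dem i" using assms unfolding assignment_def by auto
  have "(\<Sum>i\<in>Dn. \<Sum>j\<in>Fc. (l i j + \<beta> j - node_delay Fc l \<beta> i) * x i j)
      = (\<Sum>i\<in>Dn. \<Sum>j\<in>Fc. l i j * x i j) + (\<Sum>i\<in>Dn. \<Sum>j\<in>Fc. \<beta> j * x i j)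
        - (\<Sum>i\<in>Dn. node_delay Fc l \<beta> i * (\<Sum>j\<in>Fc. x i j))"
  proof -
    have "\<And>i. (\<Sum>j\<in>Fc. (l i j + \<beta> j - node_delay Fc l \<beta> i) * x i j)
       = (\<Sum>j\<in>Fc. l i j * x i j) + (\<Sum>j\<in>Fc. \<beta> j * x i j) - node_delay Fc l \<beta> i * (\<Sum>j\<in>Fc. x i j)"
      by (simp add: ring_distribs sum.distrib sum_subtractf sum_distrib_left)
    thus ?thesis by (simp add: sum.distrib sum_subtractf)
  qed
  also have "(\<Sum>i\<in>Dn. node_delay Fc l \<beta> i * (\<Sum>j\<in>Fc. x i j)) = total_delay Dn Fc l Dem \<beta>"
    unfolding total_delay_def by (rule sum.cong) (auto simp: rs)
  also have "(\<Sum>i\<in>Dn. \<Sum>j\<in>Fc. \<beta> j * x i j) = (\<Sum>j\<in>Fc. \<beta> j * (\<Sum>i\<in>Dn. x i j))"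
    by (subst sum.swap) (simp add: sum_distrib_left)
  finally show ?thesis unfolding gapv_def
    by (simp add: algebra_simps sum.distrib sum_subtractf)
qed

lemma nd_le:
  assumes "finite Fc" "j \<in> Fc"
  shows "node_delay Fc l \<beta> i \<le> l i j + \<beta> j"
  unfolding node_delay_def using assms by (intro Min_le) auto

lemma nd_in:
  assumes "finite Fc" "Fc \<noteq> {}"
  shows "\<exists>j\<in>Fc. node_delay Fc l \<beta> i = l i j + \<beta> j"
proof -
  have "Min ((\<lambda>j. l i j + \<beta> j) ` Fc) \<in> (\<lambda>j. l i j + \<beta> j) ` Fc"
    using assms by (intro Min_in) auto
  thus ?thesis unfolding node_delay_def by auto
qed

lemma gap_nonneg:
  assumes "finite Dn" "finite Fc" "assignment Dn Fc Dem Cap x" "\<forall>j\<in>Fc. \<beta> j \<ge> 0"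
  shows "gapv Dn Fc l Cap x \<beta> \<ge> 0"
  unfolding gapv_def
proof (intro add_nonneg_nonneg sum_nonneg)
  fix i j assume "i \<in> Dn" "j \<in> Fc"
  thus "0 \<le> (l i j + \<beta> j - node_delay Fc l \<beta> i) * x i j"
    using assms nd_le[OF assms(2), of j l \<beta> i] unfolding assignment_def by auto
next
  fix j assume "j \<in> Fc"
  thus "0 \<le> \<beta> j * (Cap j - (\<Sum>i\<in>Dn. x i j))"
    using assms unfolding assignment_def by auto
qed

lemma gap_zero_eq:
  assumes "finite Dn" "finite Fc" "equilibrium Dn Fc l Dem Cap x \<beta>"
  shows "gapv Dn Fc l Cap x \<beta> = 0"
  unfolding gapv_def
proof -
  have a: "(\<Sum>i\<in>Dn. \<Sum>j\<in>Fc. (l i j + \<beta> j - node_delay Fc l \<beta> i) * x i j) = 0"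
  proof (intro sum.neutral ballI)
    fix i j assume ij: "i \<in> Dn" "j \<in> Fc"
    show "(l i j + \<beta> j - node_delay Fc l \<beta> i) * x i j = 0"
    proof (cases "x i j > 0")
      case True
      then have "\<forall>j'\<in>Fc. l i j + \<beta> j \<le> l i j' + \<beta> j'" using assms(3) ij unfolding equilibrium_def by blast
      moreover obtain j0 where "j0 \<in> Fc" "node_delay Fc l \<beta> i = l i j0 + \<beta> j0"
        using nd_in[OF assms(2), of l \<beta> i] ij by blast
      ultimately have "l i j + \<beta> j \<le> node_delay Fc l \<beta> i" by auto
      then show ?thesis using nd_le[OF assms(2) ij(2), of l \<beta> i] by auto
    next
      case False
      have "x i j \<ge> 0" using assms(3) ij unfolding equilibrium_def assignment_def by blast
      with False have "x i j = 0" by linarith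
      then show ?thesis by simp
    qed
  qed
  have b: "(\<Sum>j\<in>Fc. \<beta> j * (Cap j - (\<Sum>i\<in>Dn. x i j))) = 0"
  proof (intro sum.neutral ballI)
    fix j assume j: "j \<in> Fc"
    show "\<beta> j * (Cap j - (\<Sum>i\<in>Dn. x i j)) = 0"
    proof (cases "(\<Sum>i\<in>Dn. x i j) < Cap j")
      case True
      then have "\<beta> j = 0" using assms(3) j unfolding equilibrium_def by blast
      then show ?thesis by simp
    next
      case False
      moreover have "(\<Sum>i\<in>Dn. x i j) \<le> Cap j" using assms(3) j unfolding equilibrium_def assignment_def by blast
      ultimately have "Cap j - (\<Sum>i\<in>Dn. x i j) = 0" by linarith
      then show ?thesis by simp
    qed
  qed
  show "(\<Sum>i\<in>Dn. \<Sum>j\<in>Fc. (l i j + \<beta> j - node_delay Fc l \<beta> i) * x i j) +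
    (\<Sum>j\<in>Fc. \<beta> j * (Cap j - (\<Sum>i\<in>Dn. x i j))) = 0" using a b by simp
qed

lemma gap_zero_eqm:
  assumes "finite Dn" "finite Fc" "assignment Dn Fc Dem Cap x" "\<forall>j\<in>Fc. \<beta> j \<ge> 0"
    and "gapv Dn Fc l Cap x \<beta> = 0"
  shows "equilibrium Dn Fc l Dem Cap x \<beta>"
proof -
  let ?A = "(\<Sum>i\<in>Dn. \<Sum>j\<in>Fc. (l i j + \<beta> j - node_delay Fc l \<beta> i) * x i j)"
  let ?B = "(\<Sum>j\<in>Fc. \<beta> j * (Cap j - (\<Sum>i\<in>Dn. x i j)))"
  have s: "\<And>i j. i \<in> Dn \<Longrightarrow> j \<in> Fc \<Longrightarrow> 0 \<le> (l i j + \<beta> j - node_delay Fc l \<beta> i) * x i j"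
  proof -
    fix i j assume ij: "i \<in> Dn" "j \<in> Fc"
    have "node_delay Fc l \<beta> i \<le> l i j + \<beta> j" by (rule nd_le[OF assms(2) ij(2)])
    moreover have "x i j \<ge> 0" using assms(3) ij unfolding assignment_def by auto
    ultimately show "0 \<le> (l i j + \<beta> j - node_delay Fc l \<beta> i) * x i j" by simp
  qed
  have t: "\<And>j. j \<in> Fc \<Longrightarrow> 0 \<le> \<beta> j * (Cap j - (\<Sum>i\<in>Dn. x i j))"
    using assms unfolding assignment_def by auto
  have A0: "?A \<ge> 0" "?B \<ge> 0" using s t by (auto intro!: sum_nonneg)
  hence "?A = 0" "?B = 0" using assms(5) unfolding gapv_def by linarith+
  have inner0: "\<And>i. i \<in> Dn \<Longrightarrow> (\<Sum>j\<in>Fc. (l i j + \<beta> j - node_delay Fc l \<beta> i) * x i j) = 0"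
  proof -
    have nn: "\<forall>i\<in>Dn. 0 \<le> (\<Sum>j\<in>Fc. (l i j + \<beta> j - node_delay Fc l \<beta> i) * x i j)"
      using s by (simp add: sum_nonneg)
    fix i assume "i \<in> Dn"
    thus "(\<Sum>j\<in>Fc. (l i j + \<beta> j - node_delay Fc l \<beta> i) * x i j) = 0"
      using sum_nonneg_eq_0_iff[OF assms(1), of "\<lambda>i. \<Sum>j\<in>Fc. (l i j + \<beta> j - node_delay Fc l \<beta> i) * x i j"]
        \<open>?A = 0\<close> nn by blast
  qed
  have s0: "\<And>i j. i \<in> Dn \<Longrightarrow> j \<in> Fc \<Longrightarrow> (l i j + \<beta> j - node_delay Fc l \<beta> i) * x i j = 0"
  proof -
    fix i j assume ij: "i \<in> Dn" "j \<in> Fc"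
    have "\<forall>j\<in>Fc. (l i j + \<beta> j - node_delay Fc l \<beta> i) * x i j = 0"
      using sum_nonneg_eq_0_iff[OF assms(2), of "\<lambda>j. (l i j + \<beta> j - node_delay Fc l \<beta> i) * x i j"]
        inner0[OF ij(1)] s[OF ij(1)] by blast
    thus "(l i j + \<beta> j - node_delay Fc l \<beta> i) * x i j = 0" using ij(2) by blast
  qed
  have t0: "\<And>j. j \<in> Fc \<Longrightarrow> \<beta> j * (Cap j - (\<Sum>i\<in>Dn. x i j)) = 0"
    using sum_nonneg_eq_0_iff[OF assms(2), of "\<lambda>j. \<beta> j * (Cap j - (\<Sum>i\<in>Dn. x i j))"]
       \<open>?B = 0\<close> t by blast
  show ?thesis unfolding equilibrium_def
  proof (intro conjI ballI impI)
    show "assignment Dn Fc Dem Cap x" by fact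
  next
    fix j assume "j \<in> Fc" thus "0 \<le> \<beta> j" using assms by auto
  next
    fix i j j' assume ij: "i \<in> Dn" "j \<in> Fc" "0 < x i j" "j' \<in> Fc"
    have "l i j + \<beta> j = node_delay Fc l \<beta> i" using s0[OF ij(1,2)] ij(3) by simp
    thus "l i j + \<beta> j \<le> l i j' + \<beta> j'" using nd_le[OF assms(2) ij(4)] by simp
  next
    fix j assume "j \<in> Fc" "(\<Sum>i\<in>Dn. x i j) < Cap j"
    thus "\<beta> j = 0" using t0[of j] by simp
  qed
qed

theorem corollary3p5:
  fixes Dn :: "'d set" and Fc :: "'f set"
    and l :: "'d \<Rightarrow> 'f \<Rightarrow> real" and Dem :: "'d \<Rightarrow> real" and Cap :: "'f \<Rightarrow> real"
    and x1 x2 :: "'d \<Rightarrow> 'f \<Rightarrow> real" and \<beta>1 \<beta>2 :: "'f \<Rightarrow> real"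
  assumes "instance_ok Dn Fc l Dem Cap"
    and "\<forall>i\<in>Dn. Dem i > 0"
    and "min_delay_equilibrium Dn Fc l Dem Cap x1 \<beta>1"
    and "min_delay_equilibrium Dn Fc l Dem Cap x2 \<beta>2"
  shows "\<forall>i\<in>Dn. node_delay Fc l \<beta>1 i = node_delay Fc l \<beta>2 i"
proof (cases "Fc = {}")
  case True
  then show ?thesis unfolding node_delay_def by simp
next
  case Fne: False
  have fD: "finite Dn" and fF: "finite Fc" using assms(1) unfolding instance_ok_def by auto
  have e1: "equilibrium Dn Fc l Dem Cap x1 \<beta>1" and e2: "equilibrium Dn Fc l Dem Cap x2 \<beta>2"
    using assms(3,4) unfolding min_delay_equilibrium_def by blast+
  have a1: "assignment Dn Fc Dem Cap x1" and a2: "assignment Dn Fc Dem Cap x2"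
    and b1: "\<forall>j\<in>Fc. \<beta>1 j \<ge> 0" and b2: "\<forall>j\<in>Fc. \<beta>2 j \<ge> 0"
    using e1 e2 unfolding equilibrium_def by blast+
  have g11: "gapv Dn Fc l Cap x1 \<beta>1 = 0" by (rule gap_zero_eq[OF fD fF e1])
  have g22: "gapv Dn Fc l Cap x2 \<beta>2 = 0" by (rule gap_zero_eq[OF fD fF e2])
  have g12: "gapv Dn Fc l Cap x1 \<beta>2 \<ge> 0" by (rule gap_nonneg[OF fD fF a1 b2])
  have g21: "gapv Dn Fc l Cap x2 \<beta>1 \<ge> 0" by (rule gap_nonneg[OF fD fF a2 b1])
  have "gapv Dn Fc l Cap x1 \<beta>2 = 0"
    using g11 g22 g12 g21 gap_eq[OF a1, of l \<beta>1] gap_eq[OF a1, of l \<beta>2]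
      gap_eq[OF a2, of l \<beta>1] gap_eq[OF a2, of l \<beta>2] by linarith
  hence e12: "equilibrium Dn Fc l Dem Cap x1 \<beta>2" by (rule gap_zero_eqm[OF fD fF a1 b2])
  define \<beta>3 where "\<beta>3 = (\<lambda>j. min (\<beta>1 j) (\<beta>2 j))"
  have e3: "equilibrium Dn Fc l Dem Cap x1 \<beta>3"
    unfolding equilibrium_def
  proof (intro conjI ballI impI)
    show "assignment Dn Fc Dem Cap x1" by fact
  next
    fix j assume "j \<in> Fc" thus "0 \<le> \<beta>3 j" using b1 b2 by (auto simp: \<beta>3_def)
  next
    fix i j j' assume ij: "i \<in> Dn" "j \<in> Fc" "0 < x1 i j" "j' \<in> Fc"
    have "l i j + \<beta>1 j \<le> l i j' + \<beta>1 j'" using e1 ij unfolding equilibrium_def by blast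
    moreover have "l i j + \<beta>2 j \<le> l i j' + \<beta>2 j'" using e12 ij unfolding equilibrium_def by blast
    ultimately show "l i j + \<beta>3 j \<le> l i j' + \<beta>3 j'" unfolding \<beta>3_def by (auto simp: min_def)
  next
    fix j assume "j \<in> Fc" "(\<Sum>i\<in>Dn. x1 i j) < Cap j"
    hence "\<beta>1 j = 0" using e1 unfolding equilibrium_def by blast
    thus "\<beta>3 j = 0" using b2 \<open>j \<in> Fc\<close> unfolding \<beta>3_def by auto
  qed
  have mono: "node_delay Fc l \<beta>3 i \<le> node_delay Fc l \<beta> i" if "\<forall>j\<in>Fc. \<beta>3 j \<le> \<beta> j" for \<beta> i
  proof -
    obtain j where "j \<in> Fc" "node_delay Fc l \<beta> i = l i j + \<beta> j" using nd_in[OF fF Fne, of l \<beta> i] by blast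
    moreover have "\<beta>3 j \<le> \<beta> j" using that \<open>j \<in> Fc\<close> by blast
    ultimately show ?thesis using nd_le[OF fF \<open>j \<in> Fc\<close>, of l \<beta>3 i] by linarith
  qed
  have eqlem: "\<forall>i\<in>Dn. node_delay Fc l \<beta> i = node_delay Fc l \<beta>3 i"
    if "\<forall>j\<in>Fc. \<beta>3 j \<le> \<beta> j" "min_delay_equilibrium Dn Fc l Dem Cap x \<beta>" for \<beta> x
  proof -
    have le: "total_delay Dn Fc l Dem \<beta> \<le> total_delay Dn Fc l Dem \<beta>3"
      using that(2) e3 unfolding min_delay_equilibrium_def by blast
    have nn: "\<And>i. i \<in> Dn \<Longrightarrow> 0 \<le> Dem i * (node_delay Fc l \<beta> i - node_delay Fc l \<beta>3 i)"
      using mono[OF that(1)] assms(2) by (simp add: less_imp_le)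
    have "(\<Sum>i\<in>Dn. Dem i * (node_delay Fc l \<beta> i - node_delay Fc l \<beta>3 i)) \<le> 0"
      using le unfolding total_delay_def by (simp add: right_diff_distrib sum_subtractf)
    hence "(\<Sum>i\<in>Dn. Dem i * (node_delay Fc l \<beta> i - node_delay Fc l \<beta>3 i)) = 0"
    proof -
      have "0 \<le> (\<Sum>i\<in>Dn. Dem i * (node_delay Fc l \<beta> i - node_delay Fc l \<beta>3 i))"
        by (rule sum_nonneg) (rule nn)
      thus ?thesis using \<open>(\<Sum>i\<in>Dn. Dem i * (node_delay Fc l \<beta> i - node_delay Fc l \<beta>3 i)) \<le> 0\<close> by linarith
    qed
    hence z: "\<forall>i\<in>Dn. Dem i * (node_delay Fc l \<beta> i - node_delay Fc l \<beta>3 i) = 0"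
      using nn sum_nonneg_eq_0_iff[OF fD, of "\<lambda>i. Dem i * (node_delay Fc l \<beta> i - node_delay Fc l \<beta>3 i)"] by blast
    show ?thesis
    proof (intro ballI)
      fix i assume i: "i \<in> Dn"
      have "Dem i * (node_delay Fc l \<beta> i - node_delay Fc l \<beta>3 i) = 0" using z i by blast
      moreover have "Dem i > 0" using assms(2) i by blast
      ultimately show "node_delay Fc l \<beta> i = node_delay Fc l \<beta>3 i" by simp
    qed
  qed
  have "\<forall>i\<in>Dn. node_delay Fc l \<beta>1 i = node_delay Fc l \<beta>3 i"
    by (rule eqlem[OF _ assms(3)]) (simp add: \<beta>3_def)
  moreover have "\<forall>i\<in>Dn. node_delay Fc l \<beta>2 i = node_delay Fc l \<beta>3 i"
    by (rule eqlem[OF _ assms(4)]) (simp add: \<beta>3_def)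
  ultimately show ?thesis by simp
qed

end
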